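(* Consider the sparse signal in noise model: $S\in\{1,\dots,N\}$, $\mathcal{X}_S=\{\mathbf{x}\in\mathbb{R}^N:\|\mathbf{x}\|_0\le S\}$, $\sigma>0$, $\mathbf{y}=\mathbf{x}+\mathbf{n}$, $\mathbf{n}\sim\mathcal{N}(\mathbf{0},\sigma^2\mathbf{I})$, parameter function $g(\mathbf{x})=x_k$ for fixed $k\in[N]$. Let $\mathbf{x}_0\in\mathcal{X}_S$ and $\mathcal{K}=\{k_1,\dots,k_{|\mathcal{K}|}\}\subseteq[N]$ with $|\mathcal{K}|\le S$. Let $c:\mathcal{X}_S\to\mathbb{R}$ be a bias function whose partial derivatives $\frac{\partial c(\mathbf{x})}{\partial x_{k_i}}\big|_{\mathbf{x}=\mathbf{x}_0^{\mathcal{K}}}$ exist for all $k_i\in\mathcal{K}$, let $\gamma(\mathbf{x})=c(\mathbf{x})+x_k$ and $(\mathbf{b}_{\mathbf{x}_0})_i=\delta_{k,k_i}+\frac{\partial c(\mathbf{x})}{\partial x_{k_i}}\big|_{\mathbf{x}=\mathbf{x}_0^{\mathcal{K}}}$, $i\in[|\mathcal{K}|]$. Then $$M(c,\mathbf{x}_0)\ \ge\ \exp\Big(-\tfrac{1}{\sigma^2}\big\|\mathbf{x}_0^{[N]\setminus\mathcal{K}}\big\|_2^2\Big)\big[\sigma^2\|\mathbf{b}_{\mathbf{x}_0}\|_2^2+\gamma^2(\mathbf{x}_0^{\mathcal{K}})\big]-\gamma^2(\mathbf{x}_0).$$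
   Context: For $\mathcal{I}\subseteq[N]$, $\mathbf{x}^{\mathcal{I}}$ is $\mathbf{x}$ with all entries outside $\mathcal{I}$ set to zero; $\delta_{k,l}$ = Kronecker delta. $M(c,\mathbf{x}_0)$ is the infimum of $v(\hat g;\mathbf{x}_0)=\mathsf{E}_{\mathbf{x}_0}\{(\hat g(\mathbf{y})-\mathsf{E}_{\mathbf{x}_0}\hat g(\mathbf{y}))^2\}$ over estimators $\hat g:\mathbb{R}^N\to\mathbb{R}$ with finite variance at $\mathbf{x}_0$ and $\mathsf{E}_{\mathbf{x}}\{\hat g(\mathbf{y})\}-x_k=c(\mathbf{x})$ for all $\mathbf{x}\in\mathcal{X}_S$ ($+\infty$ if none exists). *)

theory Defs
  imports "HOL-Probability.Probability"
begin

text \<open>Vectors in R^N are modelled as real^'n for a finite index type 'n (N = CARD('n)).\<close>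

definition l0norm :: "real^'n \<Rightarrow> nat" where
  "l0norm x = card {i. x $ i \<noteq> 0}"

definition sparse_set :: "nat \<Rightarrow> (real^'n) set" where
  "sparse_set S = {x. l0norm x \<le> S}"

definition restr :: "real^'n \<Rightarrow> 'n set \<Rightarrow> real^'n" where
  "restr x I = (\<chi> i. if i \<in> I then x $ i else 0)"

text \<open>Distribution of y = x + n, n ~ N(0, sigma^2 I).\<close>
definition gauss_meas :: "real \<Rightarrow> real^'n \<Rightarrow> (real^'n) measure" where
  "gauss_meas \<sigma> x = density lborel
     (\<lambda>y. ennreal ((2 * pi * \<sigma>\<^sup>2) powr (- real CARD('n) / 2)
                    * exp (- (norm (y - x))\<^sup>2 / (2 * \<sigma>\<^sup>2))))"

definition admissible :: "nat \<Rightarrow> real \<Rightarrow> 'n \<Rightarrow> (real^'n \<Rightarrow> real) \<Rightarrow> real^'n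
    \<Rightarrow> (real^'n \<Rightarrow> real) \<Rightarrow> bool" where
  "admissible S \<sigma> k c x0 g \<longleftrightarrow>
     g \<in> borel_measurable lborel \<and>
     integrable (gauss_meas \<sigma> x0) (\<lambda>y. (g y)\<^sup>2) \<and>
     (\<forall>x \<in> sparse_set S. integrable (gauss_meas \<sigma> x) g \<and>
        (\<integral>y. g y \<partial>gauss_meas \<sigma> x) - x $ k = c x)"

definition est_variance :: "real \<Rightarrow> (real^'n \<Rightarrow> real) \<Rightarrow> real^'n \<Rightarrow> real" where
  "est_variance \<sigma> g x0 =
     (\<integral>y. (g y - (\<integral>z. g z \<partial>gauss_meas \<sigma> x0))\<^sup>2 \<partial>gauss_meas \<sigma> x0)"

text \<open>Minimum achievable variance M(c,x0); Inf of the empty set is +infinity.\<close>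
definition min_var :: "nat \<Rightarrow> real \<Rightarrow> 'n \<Rightarrow> (real^'n \<Rightarrow> real) \<Rightarrow> real^'n \<Rightarrow> ereal" where
  "min_var S \<sigma> k c x0 =
     (INF g \<in> {g. admissible S \<sigma> k c x0 g}. ereal (est_variance \<sigma> g x0))"

end

theory Submission
  imports Defs
begin

definition gd :: "real \<Rightarrow> real^'n \<Rightarrow> real^'n \<Rightarrow> real" where
  "gd \<sigma> m y = (2 * pi * \<sigma>\<^sup>2) powr (- real CARD('n) / 2) * exp (- (norm (y - m))\<^sup>2 / (2 * \<sigma>\<^sup>2))"

lemma gauss_meas_gd: "gauss_meas \<sigma> m = density lborel (\<lambda>y. ennreal (gd \<sigma> m y))"
  unfolding gauss_meas_def gd_def ..

lemma gd_pos: "\<sigma> > 0 \<Longrightarrow> gd \<sigma> m y > 0"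
  unfolding gd_def by simp

lemma gd_meas[measurable]: "gd \<sigma> m \<in> borel_measurable borel"
  unfolding gd_def by measurable

lemma gd_prod:
  fixes m y :: "real^'n"
  assumes "\<sigma> > 0"
  shows "gd \<sigma> m y = (\<Prod>b\<in>Basis. normal_density (m \<bullet> b) \<sigma> (y \<bullet> b))"
proof -
  have c: "card (Basis :: (real^'n) set) = CARD('n)" by simp
  have a: "(2 * pi * \<sigma>\<^sup>2) powr (- real CARD('n) / 2) = (1 / sqrt (2 * pi * \<sigma>\<^sup>2)) ^ CARD('n)"
  proof -
    have pos: "2 * pi * \<sigma>\<^sup>2 > 0" using assms by simp
    have "(2 * pi * \<sigma>\<^sup>2) powr (- real CARD('n) / 2) = ((2 * pi * \<sigma>\<^sup>2) powr (- 1 / 2)) powr real CARD('n)"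
      by (simp add: powr_powr)
    also have "\<dots> = ((2 * pi * \<sigma>\<^sup>2) powr (- 1 / 2)) ^ CARD('n)"
      using pos by (subst powr_realpow) auto
    also have "(2 * pi * \<sigma>\<^sup>2) powr (- 1 / 2) = 1 / sqrt (2 * pi * \<sigma>\<^sup>2)"
    proof -
      have "(2 * pi * \<sigma>\<^sup>2) powr (- 1 / 2) = inverse ((2 * pi * \<sigma>\<^sup>2) powr (1 / 2))"
        using powr_minus[of "2 * pi * \<sigma>\<^sup>2" "1/2"] by simp
      also have "(2 * pi * \<sigma>\<^sup>2) powr (1 / 2) = sqrt (2 * pi * \<sigma>\<^sup>2)"
        using pos by (intro powr_half_sqrt) simp
      finally show ?thesis by (simp add: inverse_eq_divide)
    qed
    finally show ?thesis .
  qed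
  have n: "(norm (y - m))\<^sup>2 = (\<Sum>b\<in>Basis. (y \<bullet> b - m \<bullet> b)\<^sup>2)"
  proof -
    have "(norm (y - m))\<^sup>2 = (\<Sum>b\<in>Basis. ((y - m) \<bullet> b) * ((y - m) \<bullet> b))"
      unfolding power2_norm_eq_inner by (rule euclidean_inner)
    also have "\<dots> = (\<Sum>b\<in>Basis. (y \<bullet> b - m \<bullet> b)\<^sup>2)"
      by (rule sum.cong) (auto simp: inner_diff_left power2_eq_square)
    finally show ?thesis .
  qed
  have "exp (- (norm (y - m))\<^sup>2 / (2 * \<sigma>\<^sup>2)) = (\<Prod>b\<in>Basis. exp (- (y \<bullet> b - m \<bullet> b)\<^sup>2 / (2 * \<sigma>\<^sup>2)))"
  proof -
    have "- (norm (y - m))\<^sup>2 / (2 * \<sigma>\<^sup>2) = (\<Sum>b\<in>Basis. - (y \<bullet> b - m \<bullet> b)\<^sup>2 / (2 * \<sigma>\<^sup>2))"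
      unfolding n by (simp add: sum_divide_distrib sum_negf)
    then show ?thesis by (simp add: exp_sum)
  qed
  then show ?thesis
    unfolding gd_def normal_density_def a
    by (simp add: prod_dividef c power2_commute power_one_over)
qed

lemma gd_nn_integral:
  fixes m :: "real^'n"
  assumes "\<sigma> > 0"
  shows "(\<integral>\<^sup>+y. ennreal (gd \<sigma> m y) \<partial>lborel) = 1"
proof -
  have "(\<integral>\<^sup>+y. ennreal (gd \<sigma> m y) \<partial>lborel) = (\<integral>\<^sup>+y. (\<Prod>b\<in>Basis. ennreal (normal_density (m \<bullet> b) \<sigma> (y \<bullet> b))) \<partial>lborel)"
    using assms by (simp add: gd_prod prod_ennreal)
  also have "\<dots> = (\<Prod>b\<in>(Basis::(real^'n) set). (\<integral>\<^sup>+x. ennreal (normal_density (m \<bullet> b) \<sigma> x) \<partial>lborel))"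
    by (rule nn_integral_lborel_prod) auto
  also have "\<dots> = 1"
  proof -
    have "\<And>\<mu>. (\<integral>\<^sup>+x. ennreal (normal_density \<mu> \<sigma> x) \<partial>lborel) = 1"
      using nn_integral_eq_integral[OF integrable_normal_density] assms by simp
    then show ?thesis by simp
  qed
  finally show ?thesis .
qed

lemma gd_integrable: "\<sigma> > 0 \<Longrightarrow> integrable lborel (gd \<sigma> m)"
  by (rule integrableI_nonneg) (auto simp: gd_nn_integral less_imp_le[OF gd_pos])

lemma gd_integral: "\<sigma> > 0 \<Longrightarrow> (\<integral>y. gd \<sigma> m y \<partial>lborel) = 1"
  by (subst integral_eq_nn_integral) (auto simp: gd_nn_integral less_imp_le[OF gd_pos])

lemma gd_meas_lborel[measurable]: "gd \<sigma> m \<in> borel_measurable lborel"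
  by simp

lemma gd_mult:
  fixes x z w y :: "real^'n"
  assumes "\<sigma> > 0"
  shows "gd \<sigma> z y * gd \<sigma> w y / gd \<sigma> x y = exp (((z - x) \<bullet> (w - x)) / \<sigma>\<^sup>2) * gd \<sigma> (z + w - x) y"
proof -
  define C where "C = (2 * pi * \<sigma>\<^sup>2) powr (- real CARD('n) / 2)"
  have C: "C > 0" unfolding C_def using assms by simp
  have ex: "- (norm (y - z))\<^sup>2 / (2 * \<sigma>\<^sup>2) + - (norm (y - w))\<^sup>2 / (2 * \<sigma>\<^sup>2) - - (norm (y - x))\<^sup>2 / (2 * \<sigma>\<^sup>2)
      = ((z - x) \<bullet> (w - x)) / \<sigma>\<^sup>2 + - (norm (y - (z + w - x)))\<^sup>2 / (2 * \<sigma>\<^sup>2)"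
  proof -
    have "- (norm (y - z))\<^sup>2 - (norm (y - w))\<^sup>2 + (norm (y - x))\<^sup>2
      = 2 * ((z - x) \<bullet> (w - x)) - (norm (y - (z + w - x)))\<^sup>2"
      by (simp add: power2_norm_eq_inner inner_diff_left inner_diff_right inner_add_left inner_add_right inner_commute algebra_simps)
    then show ?thesis using assms by (simp add: field_simps)
  qed
  have "gd \<sigma> z y * gd \<sigma> w y / gd \<sigma> x y = C * exp (- (norm (y - z))\<^sup>2 / (2 * \<sigma>\<^sup>2) + - (norm (y - w))\<^sup>2 / (2 * \<sigma>\<^sup>2) - - (norm (y - x))\<^sup>2 / (2 * \<sigma>\<^sup>2))"
  proof -
    have e: "exp (A + B - D) = exp A * exp B / exp D" for A B D :: real
      by (simp only: exp_diff exp_add)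
    show ?thesis unfolding e unfolding gd_def C_def[symmetric] using C by simp
  qed
  also have "\<dots> = exp (((z - x) \<bullet> (w - x)) / \<sigma>\<^sup>2) * gd \<sigma> (z + w - x) y"
    unfolding ex gd_def C_def[symmetric] by (simp add: exp_add[symmetric])
  finally show ?thesis .
qed

lemma dens_integrable:
  assumes "f \<in> borel_measurable lborel"
  shows "integrable (gauss_meas \<sigma> m) f \<longleftrightarrow> integrable lborel (\<lambda>y. gd \<sigma> m y * f y)"
proof -
  have "gd \<sigma> m y \<ge> 0" for y unfolding gd_def by simp
  then show ?thesis unfolding gauss_meas_gd using assms
    by (subst integrable_density) auto
qed

lemma dens_integral:
  assumes "f \<in> borel_measurable lborel"
  shows "(\<integral>y. f y \<partial>gauss_meas \<sigma> m) = (\<integral>y. gd \<sigma> m y * f y \<partial>lborel)"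
proof -
  have "gd \<sigma> m y \<ge> 0" for y unfolding gd_def by simp
  then show ?thesis unfolding gauss_meas_gd using assms
    by (subst integral_density) auto
qed

lemma key_ineq:
  fixes x0 :: "real^'n" and z :: "'j \<Rightarrow> real^'n" and a :: "'j \<Rightarrow> real"
  assumes sp: "\<sigma> > 0" and fin: "finite J"
    and gm[measurable]: "g \<in> borel_measurable lborel"
    and i2: "integrable lborel (\<lambda>y. gd \<sigma> x0 y * (g y)\<^sup>2)"
    and i1: "\<And>j. j \<in> J \<Longrightarrow> integrable lborel (\<lambda>y. gd \<sigma> (z j) y * g y)"
  shows "(\<integral>y. gd \<sigma> x0 y * (g y)\<^sup>2 \<partial>lborel) \<ge>
     2 * s * (\<Sum>j\<in>J. a j * (\<integral>y. gd \<sigma> (z j) y * g y \<partial>lborel))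
     - s\<^sup>2 * (\<Sum>j\<in>J. \<Sum>l\<in>J. a j * a l * exp (((z j - x0) \<bullet> (z l - x0)) / \<sigma>\<^sup>2))"
proof -
  define W where "W y = (\<Sum>j\<in>J. a j * (gd \<sigma> (z j) y / gd \<sigma> x0 y))" for y
  define R where "R y = gd \<sigma> x0 y * (g y)\<^sup>2 - 2 * s * (\<Sum>j\<in>J. a j * (gd \<sigma> (z j) y * g y))
     + s\<^sup>2 * (\<Sum>j\<in>J. \<Sum>l\<in>J. a j * a l * exp (((z j - x0) \<bullet> (z l - x0)) / \<sigma>\<^sup>2) * gd \<sigma> (z j + z l - x0) y)" for y
  have pw: "gd \<sigma> x0 y * (g y - s * W y)\<^sup>2 = R y" for y
  proof -
    have p: "gd \<sigma> x0 y > 0" using gd_pos[OF sp] .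
    have 1: "gd \<sigma> x0 y * (g y * W y) = (\<Sum>j\<in>J. a j * (gd \<sigma> (z j) y * g y))"
      unfolding W_def using p by (simp add: sum_distrib_left field_simps)
    have 2: "gd \<sigma> x0 y * (W y)\<^sup>2 = (\<Sum>j\<in>J. \<Sum>l\<in>J. a j * a l * exp (((z j - x0) \<bullet> (z l - x0)) / \<sigma>\<^sup>2) * gd \<sigma> (z j + z l - x0) y)"
    proof -
      have "gd \<sigma> x0 y * (W y)\<^sup>2 = (\<Sum>j\<in>J. \<Sum>l\<in>J. a j * a l * (gd \<sigma> (z j) y * gd \<sigma> (z l) y / gd \<sigma> x0 y))"
        unfolding W_def power2_eq_square sum_product using p
        by (simp add: sum_distrib_left field_simps)
      also have "\<dots> = (\<Sum>j\<in>J. \<Sum>l\<in>J. a j * a l * exp (((z j - x0) \<bullet> (z l - x0)) / \<sigma>\<^sup>2) * gd \<sigma> (z j + z l - x0) y)"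
        by (simp add: gd_mult[OF sp] mult.assoc)
      finally show ?thesis .
    qed
    have "gd \<sigma> x0 y * (g y - s * W y)\<^sup>2 = gd \<sigma> x0 y * (g y)\<^sup>2 - 2 * s * (gd \<sigma> x0 y * (g y * W y)) + s\<^sup>2 * (gd \<sigma> x0 y * (W y)\<^sup>2)"
      by (simp add: power2_eq_square algebra_simps)
    then show ?thesis unfolding R_def 1 2 .
  qed
  have int1: "integrable lborel (\<lambda>y. \<Sum>j\<in>J. a j * (gd \<sigma> (z j) y * g y))"
    using i1 by simp
  have int2: "integrable lborel (\<lambda>y. \<Sum>j\<in>J. \<Sum>l\<in>J. a j * a l * exp (((z j - x0) \<bullet> (z l - x0)) / \<sigma>\<^sup>2) * gd \<sigma> (z j + z l - x0) y)"
    by (intro Bochner_Integration.integrable_sum integrable_mult_right gd_integrable[OF sp])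
  have "(\<integral>y. R y \<partial>lborel) = (\<integral>y. gd \<sigma> x0 y * (g y)\<^sup>2 \<partial>lborel)
     - 2 * s * (\<Sum>j\<in>J. a j * (\<integral>y. gd \<sigma> (z j) y * g y \<partial>lborel))
     + s\<^sup>2 * (\<Sum>j\<in>J. \<Sum>l\<in>J. a j * a l * exp (((z j - x0) \<bullet> (z l - x0)) / \<sigma>\<^sup>2))"
  proof -
    have "(\<integral>y. R y \<partial>lborel) = (\<integral>y. gd \<sigma> x0 y * (g y)\<^sup>2 \<partial>lborel)
     - 2 * s * (\<integral>y. (\<Sum>j\<in>J. a j * (gd \<sigma> (z j) y * g y)) \<partial>lborel)
     + s\<^sup>2 * (\<integral>y. (\<Sum>j\<in>J. \<Sum>l\<in>J. a j * a l * exp (((z j - x0) \<bullet> (z l - x0)) / \<sigma>\<^sup>2) * gd \<sigma> (z j + z l - x0) y) \<partial>lborel)"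
      unfolding R_def using i2 int1 int2
      by (simp add: integral_add integral_diff integral_mult_right_zero)
    also have "(\<integral>y. (\<Sum>j\<in>J. a j * (gd \<sigma> (z j) y * g y)) \<partial>lborel) = (\<Sum>j\<in>J. a j * (\<integral>y. gd \<sigma> (z j) y * g y \<partial>lborel))"
      using i1 by (subst Bochner_Integration.integral_sum) (auto intro: integrable_mult_right)
    also have "(\<integral>y. (\<Sum>j\<in>J. \<Sum>l\<in>J. a j * a l * exp (((z j - x0) \<bullet> (z l - x0)) / \<sigma>\<^sup>2) * gd \<sigma> (z j + z l - x0) y) \<partial>lborel)
       = (\<Sum>j\<in>J. \<Sum>l\<in>J. a j * a l * exp (((z j - x0) \<bullet> (z l - x0)) / \<sigma>\<^sup>2))"
    proof -
      have i: "\<And>j. integrable lborel (\<lambda>y. \<Sum>l\<in>J. a j * a l * exp (((z j - x0) \<bullet> (z l - x0)) / \<sigma>\<^sup>2) * gd \<sigma> (z j + z l - x0) y)"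
        by (intro Bochner_Integration.integrable_sum integrable_mult_right gd_integrable[OF sp])
      have e: "\<And>j. (\<integral>y. (\<Sum>l\<in>J. a j * a l * exp (((z j - x0) \<bullet> (z l - x0)) / \<sigma>\<^sup>2) * gd \<sigma> (z j + z l - x0) y) \<partial>lborel)
         = (\<Sum>l\<in>J. a j * a l * exp (((z j - x0) \<bullet> (z l - x0)) / \<sigma>\<^sup>2))"
        by (subst Bochner_Integration.integral_sum) (auto intro!: integrable_mult_right gd_integrable[OF sp] simp: gd_integral[OF sp])
      show ?thesis by (subst Bochner_Integration.integral_sum[OF i]) (simp add: e)
    qed
    finally show ?thesis .
  qed
  moreover have "(\<integral>y. R y \<partial>lborel) \<ge> 0"
    unfolding pw[symmetric] by (rule Bochner_Integration.integral_nonneg) (simp add: less_imp_le[OF gd_pos[OF sp]])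
  ultimately show ?thesis by linarith
qed

lemma restr_split: "restr x K + restr x (UNIV - K) = x"
  by (simp add: vec_eq_iff restr_def)

lemma exp_limit:
  assumes "\<sigma> > (0::real)"
  shows "((\<lambda>t. (exp (t\<^sup>2 / \<sigma>\<^sup>2) - 1) / t\<^sup>2) \<longlongrightarrow> 1 / \<sigma>\<^sup>2) (at 0)"
proof -
  have d: "((\<lambda>h. (exp (0 + h) - exp 0) / h) \<longlongrightarrow> 1) (at (0::real))"
    using DERIV_exp[of 0] unfolding DERIV_def by simp
  have u: "filterlim (\<lambda>t::real. t\<^sup>2 / \<sigma>\<^sup>2) (at 0) (at 0)"
  proof (subst filterlim_at, intro conjI)
    show "\<forall>\<^sub>F x in at 0. x\<^sup>2 / \<sigma>\<^sup>2 \<in> UNIV \<and> x\<^sup>2 / \<sigma>\<^sup>2 \<noteq> 0"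
      using eventually_neq_at_within[of 0 0 UNIV] assms
      by (auto elim!: eventually_mono)
    show "((\<lambda>x. x\<^sup>2 / \<sigma>\<^sup>2) \<longlongrightarrow> 0) (at 0)"
    proof -
      have "((\<lambda>x::real. x\<^sup>2 / \<sigma>\<^sup>2) \<longlongrightarrow> (0::real)\<^sup>2 / \<sigma>\<^sup>2) (at 0)"
        by (intro tendsto_intros) (use assms in auto)
      then show ?thesis by simp
    qed
  qed
  have "((\<lambda>t. (exp (0 + t\<^sup>2 / \<sigma>\<^sup>2) - exp 0) / (t\<^sup>2 / \<sigma>\<^sup>2)) \<longlongrightarrow> 1) (at 0)"
    using filterlim_compose[OF d u] by simp
  then have "((\<lambda>t. (exp (0 + t\<^sup>2 / \<sigma>\<^sup>2) - exp 0) / (t\<^sup>2 / \<sigma>\<^sup>2) * (1 / \<sigma>\<^sup>2)) \<longlongrightarrow> 1 * (1 / \<sigma>\<^sup>2)) (at 0)"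
    by (rule tendsto_mult) simp
  moreover have "(\<lambda>t. (exp (0 + t\<^sup>2 / \<sigma>\<^sup>2) - exp 0) / (t\<^sup>2 / \<sigma>\<^sup>2) * (1 / \<sigma>\<^sup>2)) = (\<lambda>t. (exp (t\<^sup>2 / \<sigma>\<^sup>2) - 1) / t\<^sup>2)"
    using assms by (intro ext) (simp add: divide_simps)
  ultimately show ?thesis by simp
qed

lemma main_bound:
  fixes x0 :: "real^'n" and K :: "'n set" and k :: 'n and c :: "real^'n \<Rightarrow> real" and g :: "real^'n \<Rightarrow> real"
  assumes sp: "\<sigma> > 0" and gm[measurable]: "g \<in> borel_measurable lborel"
    and i2: "integrable lborel (\<lambda>y. gd \<sigma> x0 y * (g y)\<^sup>2)"
    and H: "\<And>x. x \<in> sparse_set S \<Longrightarrow> integrable lborel (\<lambda>y. gd \<sigma> x y * g y) \<and>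
              (\<integral>y. gd \<sigma> x y * g y \<partial>lborel) = c x + x $ k"
    and cK: "card K \<le> S"
    and dv: "\<forall>i \<in> K. \<exists>d. ((\<lambda>t. c (restr x0 K + t *\<^sub>R axis i 1)) has_real_derivative d) (at 0)"
  shows "(\<integral>y. gd \<sigma> x0 y * (g y)\<^sup>2 \<partial>lborel) \<ge>
    exp (- (norm (restr x0 (UNIV - K)))\<^sup>2 / \<sigma>\<^sup>2)
             * (\<sigma>\<^sup>2 * (\<Sum>i\<in>K. ((if k = i then 1 else 0)
                     + deriv (\<lambda>t. c (restr x0 K + t *\<^sub>R axis i 1)) 0)\<^sup>2)
                + (c (restr x0 K) + restr x0 K $ k)\<^sup>2)"
proof -
  define x0K where "x0K = restr x0 K"
  define r where "r = restr x0 (UNIV - K)"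
  define gam where "gam z = c z + z $ k" for z
  define g0 where "g0 = gam x0K"
  define b where "b i = (if k = i then 1 else 0) + deriv (\<lambda>t. c (x0K + t *\<^sub>R axis i 1)) 0" for i
  define bt where "bt i = \<sigma>\<^sup>2 * b i" for i
  define E where "E = exp ((norm r)\<^sup>2 / \<sigma>\<^sup>2)"
  define I2 where "I2 = (\<integral>y. gd \<sigma> x0 y * (g y)\<^sup>2 \<partial>lborel)"
  define J where "J = insert None (Some ` K)"
  define ee where "ee t j = (case j of None \<Rightarrow> (0::real^'n) | Some (i::'n) \<Rightarrow> t *\<^sub>R axis i (1::real))" for t j
  define zz where "zz t j = x0K + ee t j" for t j
  define aa where "aa t j = (case j of None \<Rightarrow> g0 - (\<Sum>i\<in>K. bt i / t) | Some i \<Rightarrow> bt i / t)" for t j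
  define dq where "dq i t = (gam (x0K + t *\<^sub>R axis i 1) - g0) / t" for i t
  define G where "G t = (2 * (g0\<^sup>2 + (\<Sum>i\<in>K. bt i * dq i t))
      - (g0\<^sup>2 + (\<Sum>i\<in>K. (bt i)\<^sup>2 * ((exp (t\<^sup>2 / \<sigma>\<^sup>2) - 1) / t\<^sup>2)))) / E" for t
  have Epos: "E > 0" unfolding E_def by simp
  have x0r: "x0K - x0 = - r"
    using restr_split[of x0 K] unfolding x0K_def r_def by (simp add: algebra_simps)
  have finJ: "finite J" unfolding J_def by simp
  have rK: "r $ i = 0" if "i \<in> K" for i
    using that unfolding r_def restr_def by simp
  have sparse: "zz t j \<in> sparse_set S" if "j \<in> J" for t j
  proof -
    have "{i. zz t j $ i \<noteq> 0} \<subseteq> K"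
      using that by (auto simp: zz_def ee_def x0K_def restr_def J_def axis_def split: option.splits if_splits)
    then have "card {i. zz t j $ i \<noteq> 0} \<le> card K" by (intro card_mono) auto
    then show ?thesis using cK unfolding sparse_set_def l0norm_def by simp
  qed
  have ip: "(zz t j - x0) \<bullet> (zz t l - x0) = (norm r)\<^sup>2 + (if j = l \<and> j \<noteq> None then t\<^sup>2 else 0)"
    if "j \<in> J" "l \<in> J" for t j l
  proof -
    have d: "zz t j - x0 = ee t j - r" for j
      unfolding zz_def using x0r by (simp add: algebra_simps)
    have er: "ee t j \<bullet> r = 0" if "j \<in> J" for j
      using that rK by (auto simp: ee_def J_def inner_axis')
    have ee: "ee t j \<bullet> ee t l = (if j = l \<and> j \<noteq> None then t\<^sup>2 else 0)"
      using that by (auto simp: ee_def J_def inner_axis_axis power2_eq_square split: if_splits)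
    show ?thesis unfolding d
      using er[OF that(1)] er[OF that(2)] ee
      by (simp add: inner_diff_left inner_diff_right inner_commute power2_norm_eq_inner)
  qed
  have Nform: "(\<Sum>j\<in>J. aa t j * (\<integral>y. gd \<sigma> (zz t j) y * g y \<partial>lborel)) = g0\<^sup>2 + (\<Sum>i\<in>K. bt i * dq i t)"
    if "t \<noteq> 0" for t
  proof -
    have "(\<Sum>j\<in>J. aa t j * (\<integral>y. gd \<sigma> (zz t j) y * g y \<partial>lborel)) = (\<Sum>j\<in>J. aa t j * gam (zz t j))"
      using H[OF sparse] unfolding gam_def by (intro sum.cong) auto
    also have "\<dots> = aa t None * g0 + (\<Sum>i\<in>K. bt i / t * gam (x0K + t *\<^sub>R axis i 1))"
      unfolding J_def
      by (simp add: sum.reindex aa_def zz_def ee_def g0_def)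
    also have "\<dots> = g0\<^sup>2 + (\<Sum>i\<in>K. bt i * dq i t)"
      using that
      by (simp add: aa_def dq_def power2_eq_square algebra_simps diff_divide_distrib sum_subtractf sum_distrib_right sum_divide_distrib) (simp add: sum_distrib_left)
    finally show ?thesis .
  qed
  have Dform: "(\<Sum>j\<in>J. \<Sum>l\<in>J. aa t j * aa t l * exp (((zz t j - x0) \<bullet> (zz t l - x0)) / \<sigma>\<^sup>2))
      = E * (g0\<^sup>2 + (\<Sum>i\<in>K. (bt i)\<^sup>2 * ((exp (t\<^sup>2 / \<sigma>\<^sup>2) - 1) / t\<^sup>2)))"
    if "t \<noteq> 0" for t
  proof -
    define q where "q = exp (t\<^sup>2 / \<sigma>\<^sup>2) - 1"
    have ex: "exp (((zz t j - x0) \<bullet> (zz t l - x0)) / \<sigma>\<^sup>2) = E * (1 + (if j = l \<and> j \<noteq> None then q else 0))"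
      if "j \<in> J" "l \<in> J" for j l
      unfolding ip[OF that] E_def q_def by (auto simp: add_divide_distrib exp_add)
    have "(\<Sum>j\<in>J. \<Sum>l\<in>J. aa t j * aa t l * exp (((zz t j - x0) \<bullet> (zz t l - x0)) / \<sigma>\<^sup>2))
       = (\<Sum>j\<in>J. \<Sum>l\<in>J. E * (aa t j * aa t l) + E * q * (if j = l \<and> j \<noteq> None then aa t j * aa t l else 0))"
      by (intro sum.cong refl, subst ex) (auto simp: algebra_simps)
    also have "\<dots> = E * (\<Sum>j\<in>J. aa t j) * (\<Sum>j\<in>J. aa t j) + E * q * (\<Sum>j\<in>J. if j \<noteq> None then (aa t j)\<^sup>2 else 0)"
    proof -
      have a: "(\<Sum>j\<in>J. \<Sum>l\<in>J. E * (aa t j * aa t l)) = E * (\<Sum>j\<in>J. aa t j) * (\<Sum>j\<in>J. aa t j)"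
      proof -
        have "E * (\<Sum>j\<in>J. aa t j) * (\<Sum>j\<in>J. aa t j) = E * ((\<Sum>j\<in>J. aa t j) * (\<Sum>l\<in>J. aa t l))"
          by (simp add: mult.assoc)
        also have "\<dots> = E * (\<Sum>j\<in>J. \<Sum>l\<in>J. aa t j * aa t l)"
          by (simp only: sum_product)
        also have "\<dots> = (\<Sum>j\<in>J. \<Sum>l\<in>J. E * (aa t j * aa t l))"
          by (simp add: sum_distrib_left)
        finally show ?thesis by simp
      qed
      have b: "(\<Sum>l\<in>J. if j = l \<and> j \<noteq> None then aa t j * aa t l else 0) = (if j \<noteq> None then (aa t j)\<^sup>2 else 0)"
        if "j \<in> J" for j
        using that finJ by (cases "j = None") (simp_all add: power2_eq_square sum.delta sum.delta')
      have c: "(\<Sum>j\<in>J. \<Sum>l\<in>J. E * q * (if j = l \<and> j \<noteq> None then aa t j * aa t l else 0))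
          = E * q * (\<Sum>j\<in>J. \<Sum>l\<in>J. (if j = l \<and> j \<noteq> None then aa t j * aa t l else 0))"
        by (simp add: sum_distrib_left)
      have b': "(\<Sum>j\<in>J. \<Sum>l\<in>J. (if j = l \<and> j \<noteq> None then aa t j * aa t l else 0))
          = (\<Sum>j\<in>J. if j \<noteq> None then (aa t j)\<^sup>2 else 0)"
        by (intro sum.cong refl b)
      show ?thesis
        by (simp only: sum.distrib a c b')
    qed
    also have "(\<Sum>j\<in>J. aa t j) = g0"
      unfolding J_def by (simp add: sum.reindex aa_def)
    also have "(\<Sum>j\<in>J. if j \<noteq> None then (aa t j)\<^sup>2 else 0) = (\<Sum>i\<in>K. (bt i / t)\<^sup>2)"
      unfolding J_def by (simp add: sum.reindex aa_def)
    finally show ?thesis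
      using that unfolding q_def
      by (simp add: algebra_simps power2_eq_square sum_distrib_left sum_divide_distrib diff_divide_distrib)
  qed
  have ineq: "G t \<le> I2" if "t \<noteq> 0" for t
  proof -
    have "I2 \<ge> 2 * (1 / E) * (\<Sum>j\<in>J. aa t j * (\<integral>y. gd \<sigma> (zz t j) y * g y \<partial>lborel))
        - (1 / E)\<^sup>2 * (\<Sum>j\<in>J. \<Sum>l\<in>J. aa t j * aa t l * exp (((zz t j - x0) \<bullet> (zz t l - x0)) / \<sigma>\<^sup>2))"
      unfolding I2_def
      by (rule key_ineq[OF sp finJ gm i2]) (use H sparse in auto)
    then have kk: "I2 \<ge> 2 * (1 / E) * (g0\<^sup>2 + (\<Sum>i\<in>K. bt i * dq i t))
        - (1 / E)\<^sup>2 * (E * (g0\<^sup>2 + (\<Sum>i\<in>K. (bt i)\<^sup>2 * ((exp (t\<^sup>2 / \<sigma>\<^sup>2) - 1) / t\<^sup>2))))"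
      unfolding Nform[OF that] Dform[OF that] .
    have eq: "2 * (1 / E) * A - (1 / E)\<^sup>2 * (E * B) = (2 * A - B) / E" for A B
      using Epos by (simp add: field_simps power2_eq_square)
    show ?thesis
      using kk unfolding eq G_def .
  qed
  have dql: "((dq i) \<longlongrightarrow> b i) (at 0)" if "i \<in> K" for i
  proof -
    define f where "f t = c (x0K + t *\<^sub>R axis i 1)" for t
    have "\<exists>d. (f has_real_derivative d) (at 0)"
      using bspec[OF dv that] unfolding x0K_def f_def .
    then obtain d where d: "(f has_real_derivative d) (at 0)" by (rule exE)
    have bd: "b i = (if k = i then 1 else 0) + d"
      unfolding b_def using DERIV_imp_deriv[OF d] unfolding f_def by simp
    have "((\<lambda>h. (f (0 + h) - f 0) / h) \<longlongrightarrow> d) (at 0)"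
      using d unfolding DERIV_def .
    then have "((\<lambda>h. (f (0 + h) - f 0) / h + (if k = i then 1 else 0)) \<longlongrightarrow> d + (if k = i then 1 else 0)) (at 0)"
      by (rule tendsto_add) (rule tendsto_const)
    then have 1: "((\<lambda>h. (f (0 + h) - f 0) / h + (if k = i then 1 else 0)) \<longlongrightarrow> b i) (at 0)"
      unfolding bd by (simp only: add.commute)
    have 2: "\<forall>\<^sub>F h in at 0. (f (0 + h) - f 0) / h + (if k = i then 1 else 0) = dq i h"
      using eventually_neq_at_within[of 0 0 UNIV]
    proof (rule eventually_mono)
      fix h :: real assume h: "h \<noteq> 0"
      have "gam (x0K + h *\<^sub>R axis i 1) - g0 = (f h - f 0) + h * (if k = i then 1 else 0)"
        unfolding gam_def g0_def f_def by (simp add: axis_def)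
      then show "(f (0 + h) - f 0) / h + (if k = i then 1 else 0) = dq i h"
        unfolding dq_def using h by (simp add: add_divide_distrib)
    qed
    show ?thesis by (rule Lim_transform_eventually[OF 1 2])
  qed
  have lim: "(G \<longlongrightarrow> (2 * (g0\<^sup>2 + (\<Sum>i\<in>K. bt i * b i)) - (g0\<^sup>2 + (\<Sum>i\<in>K. (bt i)\<^sup>2 * (1 / \<sigma>\<^sup>2)))) / E) (at 0)"
    unfolding G_def
    by (intro tendsto_intros dql exp_limit[OF sp]) (use Epos in auto)
  have "(2 * (g0\<^sup>2 + (\<Sum>i\<in>K. bt i * b i)) - (g0\<^sup>2 + (\<Sum>i\<in>K. (bt i)\<^sup>2 * (1 / \<sigma>\<^sup>2)))) / E \<le> I2"
    by (rule tendsto_le[OF _ tendsto_const lim])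
       (auto intro: eventually_mono[OF eventually_neq_at_within[of 0 0 UNIV]] ineq)
  moreover have "(2 * (g0\<^sup>2 + (\<Sum>i\<in>K. bt i * b i)) - (g0\<^sup>2 + (\<Sum>i\<in>K. (bt i)\<^sup>2 * (1 / \<sigma>\<^sup>2)))) / E
     = exp (- (norm r)\<^sup>2 / \<sigma>\<^sup>2) * (\<sigma>\<^sup>2 * (\<Sum>i\<in>K. (b i)\<^sup>2) + g0\<^sup>2)"
  proof -
    have 1: "(\<Sum>i\<in>K. bt i * b i) = \<sigma>\<^sup>2 * (\<Sum>i\<in>K. (b i)\<^sup>2)"
      unfolding bt_def by (simp add: sum_distrib_left power2_eq_square mult.assoc)
    have 2: "(\<Sum>i\<in>K. (bt i)\<^sup>2 * (1 / \<sigma>\<^sup>2)) = \<sigma>\<^sup>2 * (\<Sum>i\<in>K. (b i)\<^sup>2)"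
      unfolding bt_def using sp by (simp add: sum_distrib_left power2_eq_square field_simps)
    have 3: "exp (- (norm r)\<^sup>2 / \<sigma>\<^sup>2) = 1 / E" unfolding E_def by (simp add: exp_minus inverse_eq_divide)
    show ?thesis unfolding 1 2 3 by (simp add: field_simps)
  qed
  ultimately show ?thesis
    unfolding I2_def b_def g0_def gam_def x0K_def r_def by simp
qed

theorem corollary6:
  fixes S :: nat and \<sigma> :: real and k :: "'n::finite"
    and c :: "real^'n \<Rightarrow> real" and x0 :: "real^'n" and K :: "'n set"
  assumes "1 \<le> S" and "S \<le> CARD('n)"
    and "\<sigma> > 0"
    and "x0 \<in> sparse_set S"
    and "card K \<le> S"
    and "\<forall>i \<in> K. \<exists>d. ((\<lambda>t. c (restr x0 K + t *\<^sub>R axis i 1)) has_real_derivative d) (at 0)"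
  shows "min_var S \<sigma> k c x0 \<ge>
    ereal (exp (- (norm (restr x0 (UNIV - K)))\<^sup>2 / \<sigma>\<^sup>2)
             * (\<sigma>\<^sup>2 * (\<Sum>i\<in>K. ((if k = i then 1 else 0)
                     + deriv (\<lambda>t. c (restr x0 K + t *\<^sub>R axis i 1)) 0)\<^sup>2)
                + (c (restr x0 K) + restr x0 K $ k)\<^sup>2)
           - (c x0 + x0 $ k)\<^sup>2)"
  unfolding min_var_def
proof (rule INF_greatest)
  fix g assume "g \<in> {g. admissible S \<sigma> k c x0 g}"
  then have adm: "admissible S \<sigma> k c x0 g" by simp
  have sp: "\<sigma> > 0" by fact
  have gm[measurable]: "g \<in> borel_measurable lborel" using adm unfolding admissible_def by blast
  have i2: "integrable lborel (\<lambda>y. gd \<sigma> x0 y * (g y)\<^sup>2)"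
    using adm unfolding admissible_def by (subst dens_integrable[symmetric]) auto
  have H: "integrable lborel (\<lambda>y. gd \<sigma> x y * g y) \<and> (\<integral>y. gd \<sigma> x y * g y \<partial>lborel) = c x + x $ k"
    if "x \<in> sparse_set S" for x
  proof -
    have "integrable (gauss_meas \<sigma> x) g" "(\<integral>y. g y \<partial>gauss_meas \<sigma> x) - x $ k = c x"
      using adm that unfolding admissible_def by auto
    then show ?thesis
      by (simp add: dens_integrable[OF gm] dens_integral[OF gm] algebra_simps)
  qed
  define \<mu> where "\<mu> = c x0 + x0 $ k"
  have mu: "(\<integral>z. g z \<partial>gauss_meas \<sigma> x0) = \<mu>" and i1: "integrable lborel (\<lambda>y. gd \<sigma> x0 y * g y)"
    using H[OF assms(4)] unfolding \<mu>_def by (auto simp: dens_integral[OF gm])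
  have var: "est_variance \<sigma> g x0 = (\<integral>y. gd \<sigma> x0 y * (g y)\<^sup>2 \<partial>lborel) - \<mu>\<^sup>2"
  proof -
    have "est_variance \<sigma> g x0 = (\<integral>y. gd \<sigma> x0 y * (g y - \<mu>)\<^sup>2 \<partial>lborel)"
      unfolding est_variance_def mu by (rule dens_integral) simp
    also have "\<dots> = (\<integral>y. gd \<sigma> x0 y * (g y)\<^sup>2 - 2 * \<mu> * (gd \<sigma> x0 y * g y) + \<mu>\<^sup>2 * gd \<sigma> x0 y \<partial>lborel)"
      by (rule Bochner_Integration.integral_cong) (simp_all add: power2_eq_square algebra_simps)
    also have "\<dots> = (\<integral>y. gd \<sigma> x0 y * (g y)\<^sup>2 \<partial>lborel) - 2 * \<mu> * (\<integral>y. gd \<sigma> x0 y * g y \<partial>lborel)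
        + \<mu>\<^sup>2 * (\<integral>y. gd \<sigma> x0 y \<partial>lborel)"
      using i1 i2 gd_integrable[OF sp, of x0] by simp
    also have "\<dots> = (\<integral>y. gd \<sigma> x0 y * (g y)\<^sup>2 \<partial>lborel) - \<mu>\<^sup>2"
      using H[OF assms(4)] gd_integral[OF sp, of x0] unfolding \<mu>_def by (simp add: power2_eq_square)
    finally show ?thesis .
  qed
  show "ereal (exp (- (norm (restr x0 (UNIV - K)))\<^sup>2 / \<sigma>\<^sup>2)
             * (\<sigma>\<^sup>2 * (\<Sum>i\<in>K. ((if k = i then 1 else 0)
                     + deriv (\<lambda>t. c (restr x0 K + t *\<^sub>R axis i 1)) 0)\<^sup>2)
                + (c (restr x0 K) + restr x0 K $ k)\<^sup>2)
           - (c x0 + x0 $ k)\<^sup>2) \<le> ereal (est_variance \<sigma> g x0)"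
    using main_bound[OF sp gm i2 H assms(5) assms(6)] unfolding var \<mu>_def by simp
qed

end
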